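(* Let $G=C_{2n}(a,n)$ with $a\in\{1,2\}$ be a connected cubic circulant graph. Then the induced matching number of $G$ is $\operatorname{im}(G)=\lfloor n/2\rfloor$.
   Context: For integers $1\le a<n$, $C_{2n}(a,n)$ is the simple graph on vertex set $[2n]$ in which distinct vertices $i,j$ are adjacent iff $|i-j|\in\{a,n,2n-a\}$. A matching $M$ of a graph $G$ is a set of pairwise disjoint edges; it is induced if the edges of $M$ are exactly the edges of the induced subgraph of $G$ on the vertices covered by $M$. $\operatorname{im}(G)$ is the maximum size of an induced matching of $G$. *)

theory Defs
  imports Main
begin

text \<open>Simple graphs given by a finite vertex set V and a symmetric irreflexive
  adjacency relation E (only its restriction to V matters).\<close>

definition graph_edges :: "'a set \<Rightarrow> ('a \<Rightarrow> 'a \<Rightarrow> bool) \<Rightarrow> 'a set set" where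
  "graph_edges V E = {{u, v} | u v. u \<in> V \<and> v \<in> V \<and> E u v}"

definition induced_matching :: "'a set \<Rightarrow> ('a \<Rightarrow> 'a \<Rightarrow> bool) \<Rightarrow> 'a set set \<Rightarrow> bool" where
  "induced_matching V E M \<longleftrightarrow>
     M \<subseteq> graph_edges V E \<and>
     (\<forall>e\<in>M. \<forall>f\<in>M. e \<noteq> f \<longrightarrow> e \<inter> f = {}) \<and>
     (\<forall>u v. u \<in> \<Union>M \<and> v \<in> \<Union>M \<and> E u v \<longrightarrow> {u, v} \<in> M)"

definition induced_matching_number :: "'a set \<Rightarrow> ('a \<Rightarrow> 'a \<Rightarrow> bool) \<Rightarrow> nat" where
  "induced_matching_number V E = Max {card M | M. induced_matching V E M}"

definition graph_connected :: "'a set \<Rightarrow> ('a \<Rightarrow> 'a \<Rightarrow> bool) \<Rightarrow> bool" where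
  "graph_connected V E \<longleftrightarrow>
     (\<forall>u\<in>V. \<forall>v\<in>V. (\<lambda>x y. x \<in> V \<and> y \<in> V \<and> E x y)\<^sup>*\<^sup>* u v)"

definition cubic :: "'a set \<Rightarrow> ('a \<Rightarrow> 'a \<Rightarrow> bool) \<Rightarrow> bool" where
  "cubic V E \<longleftrightarrow> (\<forall>v\<in>V. card {u \<in> V. E v u} = 3)"

definition circ_V :: "nat \<Rightarrow> nat set" where
  "circ_V n = {1..2*n}"

definition circ_adj :: "nat \<Rightarrow> nat \<Rightarrow> nat \<Rightarrow> nat \<Rightarrow> bool" where
  "circ_adj n a i j \<longleftrightarrow> i \<noteq> j \<and> nat \<bar>int i - int j\<bar> \<in> {a, n, 2*n - a}"

end

theory Submission
  imports Defs
begin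

lemma adj_iff: assumes "a < n"
  shows "circ_adj n a i j \<longleftrightarrow> i \<noteq> j \<and> (i = j + a \<or> j = i + a \<or> i = j + n \<or> j = i + n \<or> i + a = j + 2*n \<or> j + a = i + 2*n)"
  using assms unfolding circ_adj_def by auto

definition Rg :: "nat \<Rightarrow> nat \<Rightarrow> nat" where "Rg n v = (if v \<le> n then v else v - n)"
definition Pt :: "nat \<Rightarrow> nat \<Rightarrow> nat" where "Pt n v = (if v \<le> n then v + n else v - n)"
definition Sh :: "nat \<Rightarrow> nat \<Rightarrow> nat \<Rightarrow> nat" where "Sh n a r = (if r + a \<le> n then r + a else r + a - n)"
definition phi :: "nat \<Rightarrow> nat \<Rightarrow> nat set \<Rightarrow> nat \<Rightarrow> nat" where
  "phi n a S v = (if v \<le> n \<or> Pt n v \<notin> S then Rg n v else Sh n a (Rg n v))"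

lemma A1: assumes "1 \<le> a" "a < n" "v \<in> circ_V n"
  shows "circ_adj n a v (Pt n v)" "Pt n v \<in> circ_V n" "Rg n (Pt n v) = Rg n v" "Pt n (Pt n v) = v"
  using assms by (auto simp: adj_iff Pt_def Rg_def circ_V_def)

lemma B1: assumes "1 \<le> a" "a < n" "u \<in> circ_V n" "v \<in> circ_V n" "Rg n u = Rg n v" "u \<noteq> v"
  shows "u = Pt n v"
  using assms by (auto simp: Pt_def Rg_def circ_V_def split: if_splits)

lemma C1: assumes "1 \<le> a" "a < n" "u \<in> circ_V n" "v \<in> circ_V n" "Rg n u = Sh n a (Rg n v)"
  shows "circ_adj n a u v \<or> circ_adj n a u (Pt n v)"
  using assms unfolding adj_iff[OF assms(2)] by (auto simp: Pt_def Rg_def Sh_def circ_V_def split: if_splits)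

lemma D1: assumes "1 \<le> a" "a < n" "v \<in> circ_V n"
  shows "Rg n v \<noteq> Sh n a (Rg n v)" "Rg n (Pt n v) \<noteq> Sh n a (Rg n v)"
  using assms by (auto simp: Pt_def Rg_def Sh_def circ_V_def split: if_splits)

lemma E1: assumes "1 \<le> a" "a < n" "u \<in> circ_V n" "v \<in> circ_V n" "n < u" "n < v"
   "Sh n a (Rg n u) = Sh n a (Rg n v)" shows "u = v"
  using assms by (auto simp: Rg_def Sh_def circ_V_def split: if_splits)

lemma R1: assumes "v \<in> circ_V n" "1 \<le> a" "a < n" shows "phi n a S v \<in> {1..n}"
  using assms by (auto simp: phi_def Rg_def Sh_def circ_V_def)


lemma upper:
  assumes a1: "1 \<le> a" and an: "a < n" and im: "induced_matching (circ_V n) (circ_adj n a) M"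
  shows "card M \<le> n div 2"
proof -
  let ?V = "circ_V n" and ?E = "circ_adj n a"
  define S where "S = \<Union>M"
  have sub: "M \<subseteq> graph_edges ?V ?E" and dis: "\<forall>e\<in>M. \<forall>f\<in>M. e \<noteq> f \<longrightarrow> e \<inter> f = {}"
    and ind: "\<And>u v. u \<in> S \<Longrightarrow> v \<in> S \<Longrightarrow> ?E u v \<Longrightarrow> {u, v} \<in> M"
    using im unfolding induced_matching_def S_def by blast+
  have edge: "\<exists>u v. e = {u,v} \<and> u \<in> ?V \<and> v \<in> ?V \<and> ?E u v" if "e \<in> M" for e
    using sub that unfolding graph_edges_def by blast
  have card2: "card e = 2" if eM: "e \<in> M" for e
  proof -
    obtain u v where "e = {u,v}" "?E u v" using edge[OF eM] by blast
    then show ?thesis by (auto simp: circ_adj_def)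
  qed
  have MV: "M \<subseteq> Pow ?V" using edge by blast
  have finV: "finite ?V" by (simp add: circ_V_def)
  have finM: "finite M" using MV finV by (meson finite_Pow_iff finite_subset)
  have SV: "S \<subseteq> ?V" using MV S_def by blast
  have finS: "finite S" using SV finV finite_subset by blast
  have "card S = sum card M" unfolding S_def
    apply (rule card_Union_disjoint)
    using dis unfolding pairwise_def disjnt_def apply blast
    using MV finV finite_subset by blast
  also have "\<dots> = 2 * card M" using card2 by simp
  finally have cS: "card S = 2 * card M" .
  have uniq: "v = w" if "u \<in> S" "v \<in> S" "w \<in> S" "?E u v" "?E u w" for u v w
  proof (rule ccontr)
    assume "v \<noteq> w"
    have "{u,v} \<in> M" "{u,w} \<in> M" using ind that by auto
    moreover have "{u,v} \<noteq> {u,w}" using \<open>v \<noteq> w\<close> by (auto simp: doubleton_eq_iff)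
    ultimately have "{u,v} \<inter> {u,w} = {}" using dis by metis
    then show False by simp
  qed
  have adjsym: "?E u v \<Longrightarrow> ?E v u" for u v unfolding adj_iff[OF an] by auto
  have inj: "inj_on (phi n a S) S"
  proof (rule inj_onI, rule ccontr)
    fix u v assume uS: "u \<in> S" and vS: "v \<in> S" and eq: "phi n a S u = phi n a S v" and ne: "u \<noteq> v"
    have uV: "u \<in> ?V" and vV: "v \<in> ?V" using uS vS SV by auto
    have mixed: False if xS: "x \<in> S" and yS: "y \<in> S" and xy: "x \<noteq> y"
      and xp: "x \<le> n \<or> Pt n x \<notin> S" and yp: "\<not> (y \<le> n \<or> Pt n y \<notin> S)"
      and e: "Rg n x = Sh n a (Rg n y)" for x y
    proof -
      have xV: "x \<in> ?V" and yV: "y \<in> ?V" using xS yS SV by auto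
      have pyS: "Pt n y \<in> S" using yp by auto
      have ypy: "?E y (Pt n y)" using A1[OF a1 an yV] by simp
      have "?E x y \<or> ?E x (Pt n y)" using C1[OF a1 an xV yV e] .
      then show False
      proof
        assume "?E x y"
        then have "?E y x" by (rule adjsym)
        from uniq[OF yS xS pyS this ypy] have "x = Pt n y" .
        then show False using D1[OF a1 an yV] e by simp
      next
        assume "?E x (Pt n y)"
        then have h: "?E (Pt n y) x" by (rule adjsym)
        have "?E (Pt n y) y" using ypy adjsym by blast
        from uniq[OF pyS xS yS h this] have "x = y" .
        then show False using xy by simp
      qed
    qed
    show False
    proof (cases "u \<le> n \<or> Pt n u \<notin> S")
      case cu: True
      show False
      proof (cases "v \<le> n \<or> Pt n v \<notin> S")
        case cv: True
        then have "Rg n u = Rg n v" using cu eq by (simp add: phi_def)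
        then have up: "u = Pt n v" using B1[OF a1 an uV vV _ ne] by simp
        then have "Pt n u = v" using A1[OF a1 an vV] by simp
        then have "u \<le> n" "v \<le> n" using cu cv up uS vS by auto
        then show False using up vV by (simp add: Pt_def circ_V_def)
      next
        case cv: False
        then show False using mixed[OF uS vS ne cu cv] eq cu by (simp add: phi_def)
      qed
    next
      case cu: False
      show False
      proof (cases "v \<le> n \<or> Pt n v \<notin> S")
        case cv: True
        then show False using mixed[OF vS uS _ cv cu] ne eq cu by (simp add: phi_def)
      next
        case cv: False
        then show False using E1[OF a1 an uV vV] ne eq cu by (simp add: phi_def)
      qed
    qed
  qed
  have "card S = card (phi n a S ` S)" using card_image[OF inj] by simp
  also have "\<dots> \<le> card {1..n}"
    apply (rule card_mono) apply simp using R1 SV a1 an by blast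
  finally have "card S \<le> n" by simp
  then show ?thesis using cS by simp
qed


definition ff :: "nat \<Rightarrow> nat \<Rightarrow> nat" where
  "ff a k = (if a = 1 then 2*k+1 else 4*(k div 2) + k mod 2 + 1)"

lemma t1: "4*q+(s::nat) = 4*p+r+2 \<Longrightarrow> r<2 \<Longrightarrow> s<2 \<Longrightarrow> False" by presburger

lemma t4: "i = 2*I + (r::nat) \<Longrightarrow> j = 2*J + s \<Longrightarrow> r<2 \<Longrightarrow> s<2 \<Longrightarrow> n = 2*N+1 \<Longrightarrow> i<j \<Longrightarrow> j<N \<Longrightarrow>
   4*I+r+1 < 4*J+s+1 \<and> 4*J+s+1-(4*I+r+1)+2 \<noteq> n"
  by linarith

lemma ffF: assumes "a \<in> {1,2}" "a < n" "a = 2 \<longrightarrow> odd n" "k < n div 2"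
  shows "1 \<le> ff a k" "ff a k + 1 \<le> n"
proof -
  have d: "k = 2*(k div 2) + k mod 2" "k mod 2 < 2" "n = 2*(n div 2) + n mod 2" "n mod 2 < 2" by auto
  show "1 \<le> ff a k" unfolding ff_def by simp
  show "ff a k + 1 \<le> n"
  proof (cases "a = 1")
    case True
    then have "ff a k = 2*k+1" by (simp add: ff_def)
    then show ?thesis using d assms(4) by linarith
  next
    case False
    then have "n mod 2 = 1" using assms(1,3) by (simp add: odd_iff_mod_2_eq_one)
    moreover have "ff a k = 4*(k div 2) + k mod 2 + 1" using False by (simp add: ff_def)
    ultimately show ?thesis using d assms(4) by linarith
  qed
qed

lemma ffG: assumes "a \<in> {1,2}" "a < n" "a = 2 \<longrightarrow> odd n" "i < j" "j < n div 2"
  shows "ff a i < ff a j \<and> ff a j - ff a i \<noteq> a \<and> ff a j - ff a i + a \<noteq> n"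
proof -
  have d: "i = 2*(i div 2) + i mod 2" "i mod 2 < 2" "j = 2*(j div 2) + j mod 2" "j mod 2 < 2"
     "n = 2*(n div 2) + n mod 2" "n mod 2 < 2" by auto
  show ?thesis
  proof (cases "a = 1")
    case True
    then have "ff a i = 2*i+1" "ff a j = 2*j+1" by (simp_all add: ff_def)
    then show ?thesis using True d assms(4,5) by (simp only:) linarith
  next
    case False
    then have a2: "a = 2" using assms(1) by simp
    then have "n mod 2 = 1" using assms(3) by (simp add: odd_iff_mod_2_eq_one)
    moreover have "4*(j div 2) + j mod 2 + 1 - (4*(i div 2) + i mod 2 + 1) \<noteq> 2"
    proof
      assume h: "4*(j div 2) + j mod 2 + 1 - (4*(i div 2) + i mod 2 + 1) = 2"
      have "4*(j div 2) + j mod 2 = 4*(i div 2) + i mod 2 + 2" using h d assms(4) by linarith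
      then show False using t1 d by blast
    qed
    moreover have "ff a i = 4*(i div 2) + i mod 2 + 1" "ff a j = 4*(j div 2) + j mod 2 + 1"
      using a2 by (simp_all add: ff_def)
    moreover have "n = 2*(n div 2) + 1" using d \<open>n mod 2 = 1\<close> by simp
    moreover note t4[OF d(1) d(3) d(2) d(4) this assms(4,5)]
    ultimately show ?thesis using a2 by simp
  qed
qed

lemma pairs_ok: assumes "1 \<le> a" "a < n" "1 \<le> x" "x < y" "y + 1 \<le> n" "y - x \<noteq> a" "y - x + a \<noteq> n"
  "u \<in> {x, x + n}" "v \<in> {y, y + n}" shows "\<not> circ_adj n a u v"
  using assms unfolding adj_iff[OF assms(2)] by auto

lemma lower:
  assumes a1: "1 \<le> a" and an: "a < n" and a12: "a \<in> {1,2}" and od: "a = 2 \<longrightarrow> odd n"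
  shows "\<exists>M. induced_matching (circ_V n) (circ_adj n a) M \<and> card M = n div 2"
proof -
  let ?V = "circ_V n" and ?E = "circ_adj n a"
  define ed where "ed k = {ff a k, ff a k + n}" for k
  define M where "M = ed ` {..<n div 2}"
  note F = ffF[OF a12 an od] and G0 = ffG[OF a12 an od]
  have G: "ff a i < ff a j" "ff a j - ff a i \<noteq> a" "ff a j - ff a i + a \<noteq> n" if "i < j" "j < n div 2" for i j
    using G0[OF that] by auto
  have inj: "inj_on ed {..<n div 2}"
  proof (rule inj_onI, rule ccontr)
    fix i j assume i: "i \<in> {..<n div 2}" and j: "j \<in> {..<n div 2}" and e: "ed i = ed j" and ne: "i \<noteq> j"
    have "ff a i \<in> ed i" by (simp add: ed_def)
    then have "ff a i \<in> ed j" using e by simp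
    moreover have "ff a i \<noteq> ff a j" using ne G(1)[of i j] G(1)[of j i] i j by (auto simp: nat_neq_iff)
    moreover have "ff a i \<noteq> ff a j + n" using F(2)[of i] i by simp
    ultimately show False by (simp add: ed_def)
  qed
  have card: "card M = n div 2" unfolding M_def using card_image[OF inj] by simp
  have noadj: "\<not> ?E u v" if "i < n div 2" "j < n div 2" "i \<noteq> j" "u \<in> ed i" "v \<in> ed j" for i j u v
  proof (cases "i < j")
    case True
    have j: "j < n div 2" using that by simp
    show ?thesis using pairs_ok[OF a1 an _ G(1)[OF True j] _ G(2)[OF True j] G(3)[OF True j]] F that
      unfolding ed_def by auto
  next
    case False
    then have ji: "j < i" using that by simp
    have i: "i < n div 2" using that by simp
    have "\<not> ?E v u" using pairs_ok[OF a1 an _ G(1)[OF ji i] _ G(2)[OF ji i] G(3)[OF ji i]] F that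
      unfolding ed_def by auto
    then show ?thesis unfolding adj_iff[OF an] by auto
  qed
  have im: "induced_matching ?V ?E M"
    unfolding induced_matching_def
  proof (intro conjI allI impI ballI)
    show "M \<subseteq> graph_edges ?V ?E"
    proof
      fix e assume "e \<in> M"
      then obtain k where k: "k < n div 2" "e = ed k" unfolding M_def by auto
      have "ff a k \<in> ?V" "ff a k + n \<in> ?V" "?E (ff a k) (ff a k + n)"
        using F[OF k(1)] unfolding circ_V_def adj_iff[OF an] by auto
      then show "e \<in> graph_edges ?V ?E" unfolding graph_edges_def ed_def k(2) by blast
    qed
  next
    fix e f assume "e \<in> M" "f \<in> M" "e \<noteq> f"
    then obtain i j where i: "i < n div 2" and j: "j < n div 2" and ef: "e = ed i" "f = ed j" and ne: "i \<noteq> j"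
      unfolding M_def by auto
    have "ff a i \<noteq> ff a j" using ne G(1)[of i j] G(1)[of j i] i j by (auto simp: nat_neq_iff)
    moreover have "ff a i \<noteq> ff a j + n" using F(2)[of i] i by simp
    moreover have "ff a j \<noteq> ff a i + n" using F(2)[of j] j by simp
    ultimately show "e \<inter> f = {}" unfolding ef ed_def by auto
  next
    fix u v assume h: "u \<in> \<Union>M \<and> v \<in> \<Union>M \<and> ?E u v"
    then obtain i j where ij: "i < n div 2" "j < n div 2" "u \<in> ed i" "v \<in> ed j"
      unfolding M_def by auto
    show "{u, v} \<in> M"
    proof (cases "i = j")
      case True
      have "u \<noteq> v" using h unfolding circ_adj_def by simp
      then have "{u,v} = ed i" using ij True unfolding ed_def by auto
      then show ?thesis using ij unfolding M_def by auto
    next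
      case False
      then show ?thesis using noadj[OF ij(1,2) False ij(3,4)] h by simp
    qed
  qed
  show ?thesis using im card by blast
qed

lemma parity:
  assumes an: "2 < n" and c: "graph_connected (circ_V n) (circ_adj n 2)"
  shows "odd n"
proof (rule ccontr)
  assume ev: "\<not> odd n"
  let ?R = "\<lambda>x y. x \<in> circ_V n \<and> y \<in> circ_V n \<and> circ_adj n 2 x y"
  have "odd y" if "?R\<^sup>*\<^sup>* 1 y" for y
    using that
  proof (induction rule: rtranclp_induct)
    case base then show ?case by simp
  next
    case (step y z)
    then have "z = y+2 \<or> y = z+2 \<or> z = y+n \<or> y = z+n \<or> y+2 = z+2*n \<or> z+2 = y+2*n"
      unfolding adj_iff[OF an] by auto
    then show ?case using ev step.IH by (elim disjE; presburger)
  qed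
  moreover have "?R\<^sup>*\<^sup>* 1 2" using c an unfolding graph_connected_def circ_V_def by auto
  ultimately have "odd (2::nat)" by blast
  then show False by simp
qed

theorem lemma2p2:
  fixes n a :: nat
  assumes "1 \<le> a" and "a < n"
    and "a \<in> {1, 2}"
    and "graph_connected (circ_V n) (circ_adj n a)"
    and "cubic (circ_V n) (circ_adj n a)"
  shows "induced_matching_number (circ_V n) (circ_adj n a) = n div 2"
proof -
  have od: "a = 2 \<longrightarrow> odd n" using parity assms(2,4) by auto
  obtain M where M: "induced_matching (circ_V n) (circ_adj n a) M" "card M = n div 2"
    using lower[OF assms(1,2,3) od] by blast
  let ?C = "{card M | M. induced_matching (circ_V n) (circ_adj n a) M}"
  have le: "\<And>x. x \<in> ?C \<Longrightarrow> x \<le> n div 2" using upper[OF assms(1,2)] by blast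
  have fin: "finite ?C" using le by (meson atMost_iff finite_atMost finite_subset subsetI)
  have mem: "n div 2 \<in> ?C" using M(1) M(2)[symmetric] by blast
  show ?thesis unfolding induced_matching_number_def
    by (rule Max_eqI[OF fin le mem])
qed

end
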